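(* Let $I$ be a resident-minimal and hospital-complete instance and let $(P,X)$ be a prescription for $I$. Then $|\mathrm{res}\,P\setminus\mathrm{res}\,\mathrm{tent}(I)|\ge|\mathrm{tgs}(P,X)|$.
   Context: An instance $I$ consists of finite disjoint sets $R$ (residents) and $H$ (hospitals), a positive integer quota $q_h$ for each $h\in H$, for each $r\in R$ a preference list of $r$ (a sequence of distinct members of $H$, not necessarily all), and for each $h\in H$ a preference list of $h$ (a sequence of distinct members of $R$). A list is complete if it contains every member of the opposite side; an instance is hospital-complete if every hospital's list is complete. A match is a pair $(r,h)\in R\times H$. For a set $M$ of matches, $\mathrm{res}_h M=\{r:(r,h)\in M\}$, $\mathrm{res}\,M=\{r:(r,h)\in M\text{ for some }h\}$. An event is $(r,h)^+$ (proposal) or $(r,h)^-$ (rejection). For an event sequence $\sigma$, $\mathrm{prop}(\sigma)$, $\mathrm{rej}(\sigma)$ are the sets of matches proposed/rejected in $\sigma$ and $\mathrm{tent}(\sigma)=\mathrm{prop}(\sigma)\setminus\mathrm{rej}(\sigma)$. A match $(r,h)\in M$ is ousted from $M$ in $I$ if the list of $h$ in $I$ contains at least $q_h$ residents of $\mathrm{res}_h M$ and either $r$ is not on it or $r$ is preceded on it by at least $q_h$ residents of $\mathrm{res}_h M$. $I$-feasible sequences: the empty sequence is $I$-feasible; if $\sigma$ is $I$-feasible then $\sigma+(r,h)^+$ is $I$-feasible if $r\notin\mathrm{res}\,\mathrm{tent}(\sigma)$, $(r,h)\notin\mathrm{prop}(\sigma)$, $h$ is on the list of $r$ in $I$ and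 $(r,h')\in\mathrm{rej}(\sigma)$ for every $h'$ preceding $h$ on it; and $\sigma+(r,h)^-$ is $I$-feasible if $(r,h)$ is ousted from $\mathrm{prop}(\sigma)$ in $I$ and $(r,h)\notin\mathrm{rej}(\sigma)$. All maximal $I$-feasible sequences contain the same events; $\mathrm{prop}(I),\mathrm{tent}(I)$ denote $\mathrm{prop}(\sigma),\mathrm{tent}(\sigma)$ for any maximal $I$-feasible $\sigma$. $I$ is resident-minimal if $\mathrm{prop}(I)$ equals the set of matches $(r,h)$ with $h$ on the list of $r$ in $I$. For a resident-minimal and hospital-complete instance $I$, a prescription for $I$ is a pair $(P,X)$ of sets of matches such that: (P1) $P\cap\mathrm{prop}(I)=\emptyset$; (P2) for each $r\in R$ there is at most one $h$ with $(r,h)\in P$; (P3) $X\subseteq\mathrm{tent}(I)$; (P4) $\mathrm{res}\,P\cap\mathrm{res}\,\mathrm{tent}(I)\subseteq\mathrm{res}\,X$; (P5) for each $h\in H$, $|\mathrm{res}_h(P\cup(\mathrm{tent}(I)\setminus X))|\le q_h$, with equality if $\mathrm{res}_h X\neq\emptyset$; (P6) for each $h\in H$, every member of $\mathrm{res}_h(P\cup(\mathrm{tent}(I)\setminus X))$ precedes all members of $\mathrm{res}_h X$ in the list of $h$ in $I$. Its target set is $\mathrm{tgs}(P,X)=\{(r,h)\in X: r\notin\mathrm{res}\,P\}$. *)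

theory Defs
  imports Main
begin

record ('r, 'h) hr_instance =
  Res   :: "'r set"
  Hosp  :: "'h set"
  quota :: "'h \<Rightarrow> nat"
  rpref :: "'r \<Rightarrow> 'h list"
  hpref :: "'h \<Rightarrow> 'r list"

definition wf_instance :: "('r, 'h) hr_instance \<Rightarrow> bool" where
  "wf_instance I \<longleftrightarrow> finite (Res I) \<and> finite (Hosp I)
     \<and> (\<forall>h \<in> Hosp I. quota I h > 0)
     \<and> (\<forall>r \<in> Res I. distinct (rpref I r) \<and> set (rpref I r) \<subseteq> Hosp I)
     \<and> (\<forall>h \<in> Hosp I. distinct (hpref I h) \<and> set (hpref I h) \<subseteq> Res I)"

definition precedes :: "'a list \<Rightarrow> 'a \<Rightarrow> 'a \<Rightarrow> bool" where
  "precedes xs a b \<longleftrightarrow> (\<exists>i j. i < j \<and> j < length xs \<and> xs ! i = a \<and> xs ! j = b)"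

definition res_h :: "('r \<times> 'h) set \<Rightarrow> 'h \<Rightarrow> 'r set" where
  "res_h M h = {r. (r, h) \<in> M}"

definition res :: "('r \<times> 'h) set \<Rightarrow> 'r set" where
  "res M = {r. \<exists>h. (r, h) \<in> M}"

datatype ('r, 'h) event = Propose 'r 'h | Reject 'r 'h

definition propset :: "('r, 'h) event list \<Rightarrow> ('r \<times> 'h) set" where
  "propset \<sigma> = {(r, h). Propose r h \<in> set \<sigma>}"

definition rejset :: "('r, 'h) event list \<Rightarrow> ('r \<times> 'h) set" where
  "rejset \<sigma> = {(r, h). Reject r h \<in> set \<sigma>}"

definition tentset :: "('r, 'h) event list \<Rightarrow> ('r \<times> 'h) set" where
  "tentset \<sigma> = propset \<sigma> - rejset \<sigma>"

definition ousted :: "('r, 'h) hr_instance \<Rightarrow> ('r \<times> 'h) set \<Rightarrow> 'r \<Rightarrow> 'h \<Rightarrow> bool" where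
  "ousted I M r h \<longleftrightarrow> (r, h) \<in> M
     \<and> card {r' \<in> set (hpref I h). r' \<in> res_h M h} \<ge> quota I h
     \<and> (r \<notin> set (hpref I h)
        \<or> card {r' \<in> res_h M h. precedes (hpref I h) r' r} \<ge> quota I h)"

inductive feasible :: "('r, 'h) hr_instance \<Rightarrow> ('r, 'h) event list \<Rightarrow> bool" for I where
  feas_Nil: "feasible I []"
| feas_Prop: "\<lbrakk> feasible I \<sigma>; r \<in> Res I; r \<notin> res (tentset \<sigma>); (r, h) \<notin> propset \<sigma>;
     h \<in> set (rpref I r);
     \<forall>h'. precedes (rpref I r) h' h \<longrightarrow> (r, h') \<in> rejset \<sigma> \<rbrakk>
   \<Longrightarrow> feasible I (\<sigma> @ [Propose r h])"
| feas_Rej: "\<lbrakk> feasible I \<sigma>; ousted I (propset \<sigma>) r h; (r, h) \<notin> rejset \<sigma> \<rbrakk>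
   \<Longrightarrow> feasible I (\<sigma> @ [Reject r h])"

definition maximal_feasible :: "('r, 'h) hr_instance \<Rightarrow> ('r, 'h) event list \<Rightarrow> bool" where
  "maximal_feasible I \<sigma> \<longleftrightarrow> feasible I \<sigma> \<and> (\<nexists>e. feasible I (\<sigma> @ [e]))"

text \<open>prop(I), tent(I): taken from any maximal feasible sequence
  (all of them contain the same events).\<close>
definition propI :: "('r, 'h) hr_instance \<Rightarrow> ('r \<times> 'h) set" where
  "propI I = propset (SOME \<sigma>. maximal_feasible I \<sigma>)"

definition tentI :: "('r, 'h) hr_instance \<Rightarrow> ('r \<times> 'h) set" where
  "tentI I = tentset (SOME \<sigma>. maximal_feasible I \<sigma>)"

definition resident_minimal :: "('r, 'h) hr_instance \<Rightarrow> bool" where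
  "resident_minimal I \<longleftrightarrow> propI I = {(r, h). r \<in> Res I \<and> h \<in> set (rpref I r)}"

definition hospital_complete :: "('r, 'h) hr_instance \<Rightarrow> bool" where
  "hospital_complete I \<longleftrightarrow> (\<forall>h \<in> Hosp I. set (hpref I h) = Res I)"

definition prescription :: "('r, 'h) hr_instance \<Rightarrow> ('r \<times> 'h) set \<Rightarrow> ('r \<times> 'h) set \<Rightarrow> bool" where
  "prescription I P X \<longleftrightarrow>
     P \<subseteq> Res I \<times> Hosp I \<and> X \<subseteq> Res I \<times> Hosp I
   \<and> P \<inter> propI I = {}
   \<and> (\<forall>r h h'. (r, h) \<in> P \<and> (r, h') \<in> P \<longrightarrow> h = h')
   \<and> X \<subseteq> tentI I
   \<and> res P \<inter> res (tentI I) \<subseteq> res X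
   \<and> (\<forall>h \<in> Hosp I. card (res_h (P \<union> (tentI I - X)) h) \<le> quota I h
        \<and> (res_h X h \<noteq> {} \<longrightarrow> card (res_h (P \<union> (tentI I - X)) h) = quota I h))
   \<and> (\<forall>h \<in> Hosp I. \<forall>a \<in> res_h (P \<union> (tentI I - X)) h. \<forall>b \<in> res_h X h.
        precedes (hpref I h) a b)"

definition tgs :: "('r \<times> 'h) set \<Rightarrow> ('r \<times> 'h) set \<Rightarrow> ('r \<times> 'h) set" where
  "tgs P X = {(r, h) \<in> X. r \<notin> res P}"

end

theory Submission
  imports Defs
begin

lemma feasible_inv:
  assumes "feasible I \<sigma>"
  shows "rejset \<sigma> \<subseteq> propset \<sigma>
    \<and> (\<forall>r h. (r,h) \<in> propset \<sigma> \<longrightarrow> r \<in> Res I \<and> h \<in> set (rpref I r))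
    \<and> (\<forall>r h h'. (r,h) \<in> tentset \<sigma> \<longrightarrow> (r,h') \<in> tentset \<sigma> \<longrightarrow> h = h')
    \<and> distinct \<sigma>"
  using assms
proof induction
  case feas_Nil
  then show ?case by (simp add: propset_def rejset_def tentset_def)
next
  case (feas_Prop \<sigma> r h)
  then show ?case
    by (auto simp: propset_def rejset_def tentset_def res_def)
next
  case (feas_Rej \<sigma> r h)
  then show ?case
    by (auto simp: propset_def rejset_def tentset_def ousted_def)
qed

definition evs :: "('r, 'h) hr_instance \<Rightarrow> ('r, 'h) event set" where
  "evs I = (\<lambda>(r,h). Propose r h) ` (Res I \<times> Hosp I) \<union> (\<lambda>(r,h). Reject r h) ` (Res I \<times> Hosp I)"

lemma feasible_set:
  assumes "wf_instance I" "feasible I \<sigma>"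
  shows "set \<sigma> \<subseteq> evs I"
  using assms(2)
proof induction
  case feas_Nil
  then show ?case by simp
next
  case (feas_Prop \<sigma> r h)
  then have "h \<in> Hosp I" using assms(1) unfolding wf_instance_def by blast
  then show ?case using feas_Prop by (auto simp: evs_def)
next
  case (feas_Rej \<sigma> r h)
  then have "(r,h) \<in> propset \<sigma>" by (simp add: ousted_def)
  then have "r \<in> Res I \<and> h \<in> set (rpref I r)" using feasible_inv[OF feas_Rej(1)] by blast
  then have "r \<in> Res I \<and> h \<in> Hosp I" using assms(1) unfolding wf_instance_def by blast
  then show ?case using feas_Rej by (auto simp: evs_def)
qed

lemma exists_max:
  assumes "wf_instance I"
  shows "\<exists>\<sigma>. maximal_feasible I \<sigma>"
proof -
  have fin: "finite (evs I)" using assms unfolding wf_instance_def evs_def by auto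
  have bnd: "length \<sigma> \<le> card (evs I)" if "feasible I \<sigma>" for \<sigma>
  proof -
    have "length \<sigma> = card (set \<sigma>)" using feasible_inv[OF that] by (simp add: distinct_card)
    also have "\<dots> \<le> card (evs I)" using card_mono[OF fin feasible_set[OF assms that]] .
    finally show ?thesis .
  qed
  define Q where "Q n = (\<exists>\<sigma>. feasible I \<sigma> \<and> length \<sigma> = n)" for n
  have "Q 0" unfolding Q_def using feas_Nil by fastforce
  moreover have "\<forall>y. Q y \<longrightarrow> y \<le> card (evs I)" unfolding Q_def using bnd by blast
  ultimately obtain n where n: "Q n" "\<forall>y. Q y \<longrightarrow> y \<le> n"
    using Nat.ex_has_greatest_nat[of Q 0 "card (evs I)"] by blast
  then obtain \<sigma> where s: "feasible I \<sigma>" "length \<sigma> = n" unfolding Q_def by blast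
  have "\<nexists>e. feasible I (\<sigma> @ [e])"
  proof
    assume "\<exists>e. feasible I (\<sigma> @ [e])"
    then obtain e where "feasible I (\<sigma> @ [e])" by blast
    then have "Q (Suc n)" unfolding Q_def using s by force
    then show False using n by force
  qed
  then show ?thesis using s unfolding maximal_feasible_def by blast
qed

lemma quota_bound:
  assumes wf: "wf_instance I" and hc: "hospital_complete I"
    and mf: "maximal_feasible I \<sigma>" and hH: "h \<in> Hosp I"
  shows "card (res_h (tentset \<sigma>) h) \<le> quota I h"
proof (rule ccontr)
  assume big: "\<not> ?thesis"
  have fe: "feasible I \<sigma>" using mf maximal_feasible_def by blast
  note inv = feasible_inv[OF fe]
  define xs where "xs = hpref I h"
  define S where "S = res_h (tentset \<sigma>) h"
  have xsR: "set xs = Res I" using hc hH unfolding hospital_complete_def xs_def by blast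
  have SR: "S \<subseteq> set xs" using inv xsR unfolding S_def res_h_def tentset_def by blast
  have finS: "finite S" using SR finite_subset by blast
  have cS: "card S > quota I h" using big S_def by simp
  then have "S \<noteq> {}" by auto
  then obtain r0 where "r0 \<in> S" by blast
  define Is where "Is = {i. i < length xs \<and> xs ! i \<in> S}"
  have finI: "finite Is" unfolding Is_def by simp
  obtain i0 where "i0 < length xs" "xs ! i0 = r0" using SR \<open>r0 \<in> S\<close> by (metis in_set_conv_nth subsetD)
  then have "Is \<noteq> {}" unfolding Is_def using \<open>r0 \<in> S\<close> by blast
  define m where "m = Max Is"
  have mI: "m \<in> Is" using Max_in[OF finI \<open>Is \<noteq> {}\<close>] m_def by simp
  define r where "r = xs ! m"
  have rS: "r \<in> S" using mI unfolding Is_def r_def by simp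
  have sub1: "S - {r} \<subseteq> {r' \<in> res_h (propset \<sigma>) h. precedes (hpref I h) r' r}"
  proof
    fix r' assume r': "r' \<in> S - {r}"
    obtain i where i: "i < length xs" "xs ! i = r'" using SR r' by (metis DiffD1 in_set_conv_nth subsetD)
    then have "i \<in> Is" unfolding Is_def using r' by simp
    then have "i \<le> m" using finI m_def by simp
    moreover have "i \<noteq> m" using i r' r_def by auto
    ultimately have "precedes xs r' r" unfolding precedes_def using i mI Is_def r_def by force
    moreover have "r' \<in> res_h (propset \<sigma>) h" using r' unfolding S_def res_h_def tentset_def by blast
    ultimately show "r' \<in> {r' \<in> res_h (propset \<sigma>) h. precedes (hpref I h) r' r}" using xs_def by simp
  qed
  have fin2: "finite {r' \<in> res_h (propset \<sigma>) h. precedes (hpref I h) r' r}"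
    by (rule finite_subset[of _ "set xs"]) (auto simp: precedes_def xs_def)
  have "quota I h \<le> card (S - {r})" using cS rS finS by simp
  also have "\<dots> \<le> card {r' \<in> res_h (propset \<sigma>) h. precedes (hpref I h) r' r}"
    using card_mono[OF fin2 sub1] .
  finally have c1: "quota I h \<le> card {r' \<in> res_h (propset \<sigma>) h. precedes (hpref I h) r' r}" .
  have sub2: "S \<subseteq> {r' \<in> set (hpref I h). r' \<in> res_h (propset \<sigma>) h}"
    using SR unfolding S_def xs_def res_h_def tentset_def by blast
  have "quota I h \<le> card S" using cS by simp
  also have "\<dots> \<le> card {r' \<in> set (hpref I h). r' \<in> res_h (propset \<sigma>) h}"
    by (rule card_mono[OF _ sub2]) simp
  finally have c2: "quota I h \<le> card {r' \<in> set (hpref I h). r' \<in> res_h (propset \<sigma>) h}" .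
  have rt: "(r,h) \<in> tentset \<sigma>" using rS S_def res_h_def by fastforce
  then have "(r,h) \<in> propset \<sigma>" "(r,h) \<notin> rejset \<sigma>" unfolding tentset_def by auto
  then have "ousted I (propset \<sigma>) r h" unfolding ousted_def using c1 c2 by blast
  then have "feasible I (\<sigma> @ [Reject r h])" using feas_Rej[OF fe] \<open>(r,h) \<notin> rejset \<sigma>\<close> by blast
  then show False using mf unfolding maximal_feasible_def by blast
qed

lemma card_split:
  assumes "M \<subseteq> A \<times> B" "finite B" "finite M"
  shows "card M = (\<Sum>h\<in>B. card (res_h M h))"
proof -
  have M: "M = (\<Union>h\<in>B. (\<lambda>r. (r,h)) ` res_h M h)" using assms(1) unfolding res_h_def by auto
  have fr: "finite (res_h M h)" for h
    by (rule finite_subset[of _ "fst ` M"]) (force simp: res_h_def assms(3))+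
  have "card M = (\<Sum>h\<in>B. card ((\<lambda>r. (r,h)) ` res_h M h))"
    by (subst M, rule card_UN_disjoint) (auto simp: assms(2) fr)
  also have "\<dots> = (\<Sum>h\<in>B. card (res_h M h))"
    by (rule sum.cong) (auto simp: card_image inj_on_def)
  finally show ?thesis .
qed

theorem proposition7:
  fixes I :: "('r, 'h) hr_instance" and P X :: "('r \<times> 'h) set"
  assumes "wf_instance I"
    and "resident_minimal I"
    and "hospital_complete I"
    and "prescription I P X"
  shows "card (res P - res (tentI I)) \<ge> card (tgs P X)"
proof -
  define \<sigma> where "\<sigma> = (SOME \<sigma>. maximal_feasible I \<sigma>)"
  have mf: "maximal_feasible I \<sigma>" unfolding \<sigma>_def using exists_max[OF assms(1)] by (rule someI_ex)
  have fe: "feasible I \<sigma>" using mf maximal_feasible_def by blast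
  note inv = feasible_inv[OF fe]
  define T where "T = tentset \<sigma>"
  have TI: "tentI I = T" "propI I = propset \<sigma>" by (simp_all add: tentI_def propI_def \<sigma>_def T_def)
  have wf: "finite (Res I)" "finite (Hosp I)" using assms(1) wf_instance_def by blast+
  note pre = assms(4)[unfolded prescription_def TI]
  have PRH: "P \<subseteq> Res I \<times> Hosp I" using pre by (rule conjunct1)
  have XRH: "X \<subseteq> Res I \<times> Hosp I" using pre[THEN conjunct2] by (rule conjunct1)
  have disj0: "P \<inter> propset \<sigma> = {}" using pre[THEN conjunct2, THEN conjunct2] by (rule conjunct1)
  have Pfun: "\<forall>r h h'. (r, h) \<in> P \<and> (r, h') \<in> P \<longrightarrow> h = h'"
    using pre[THEN conjunct2, THEN conjunct2, THEN conjunct2] by (rule conjunct1)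
  have XT: "X \<subseteq> T"
    using pre[THEN conjunct2, THEN conjunct2, THEN conjunct2, THEN conjunct2] by (rule conjunct1)
  have p4: "res P \<inter> res T \<subseteq> res X"
    using pre[THEN conjunct2, THEN conjunct2, THEN conjunct2, THEN conjunct2, THEN conjunct2] by (rule conjunct1)
  have p5: "\<forall>h \<in> Hosp I. card (res_h (P \<union> (T - X)) h) \<le> quota I h
        \<and> (res_h X h \<noteq> {} \<longrightarrow> card (res_h (P \<union> (T - X)) h) = quota I h)"
    using pre[THEN conjunct2, THEN conjunct2, THEN conjunct2, THEN conjunct2, THEN conjunct2, THEN conjunct2] by (rule conjunct1)
  have inv2: "\<forall>r h. (r,h) \<in> propset \<sigma> \<longrightarrow> r \<in> Res I \<and> h \<in> set (rpref I r)"
    using inv by (rule conjunct2[THEN conjunct1])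
  have TR: "r \<in> Res I" if "(r,h) \<in> T" for r h
  proof -
    have "(r,h) \<in> propset \<sigma>" using that by (simp add: T_def tentset_def)
    then show ?thesis using inv2 by blast
  qed
  have disj: "P \<inter> T = {}" using disj0 unfolding T_def tentset_def by blast
  have Tfun0: "\<forall>r h h'. (r,h) \<in> tentset \<sigma> \<longrightarrow> (r,h') \<in> tentset \<sigma> \<longrightarrow> h = h'"
    using inv by (rule conjunct2[THEN conjunct2, THEN conjunct1])
  have Tfun: "(r,h) \<in> T \<Longrightarrow> (r,h') \<in> T \<Longrightarrow> h = h'" for r h h'
    using Tfun0 unfolding T_def by blast
  have finP: "finite P" by (rule finite_subset[OF PRH]) (simp add: wf)
  have finX: "finite X" by (rule finite_subset[OF XRH]) (simp add: wf)
  have rhR: "res_h M h \<subseteq> Res I" if "\<And>r h. (r,h) \<in> M \<Longrightarrow> r \<in> Res I" for M h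
    using that unfolding res_h_def by blast
  have finrh: "finite (res_h M h)" if "\<And>r h. (r,h) \<in> M \<Longrightarrow> r \<in> Res I" for M h
    by (rule finite_subset[OF rhR[OF that] wf(1)])
  have finP_h: "finite (res_h P h)" for h by (rule finrh) (use PRH in blast)
  have finTX_h: "finite (res_h (T - X) h)" for h by (rule finrh) (use TR in blast)
  have finX_h: "finite (res_h X h)" for h by (rule finrh) (use XRH in blast)
  have perh: "card (res_h X h) \<le> card (res_h P h)" if hH: "h \<in> Hosp I" for h
  proof (cases "res_h X h = {}")
    case True then show ?thesis by simp
  next
    case False
    have q: "card (res_h (P \<union> (T - X)) h) = quota I h" using p5 hH False by blast
    have u: "res_h (P \<union> (T - X)) h = res_h P h \<union> res_h (T - X) h" by (auto simp: res_h_def)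
    have d: "res_h P h \<inter> res_h (T - X) h = {}" using disj by (auto simp: res_h_def)
    have e1: "card (res_h P h) + card (res_h (T - X) h) = quota I h"
      using q unfolding u card_Un_disjoint[OF finP_h finTX_h d] .
    have u2: "res_h T h = res_h X h \<union> res_h (T - X) h" using XT by (auto simp: res_h_def)
    have d2: "res_h X h \<inter> res_h (T - X) h = {}" by (auto simp: res_h_def)
    have e2: "card (res_h X h) + card (res_h (T - X) h) = card (res_h T h)"
      unfolding u2 card_Un_disjoint[OF finX_h finTX_h d2] ..
    have "card (res_h T h) \<le> quota I h"
      using quota_bound[OF assms(1) assms(3) mf hH] T_def by simp
    then show ?thesis using e1 e2 by linarith
  qed
  have "card X = (\<Sum>h\<in>Hosp I. card (res_h X h))" by (rule card_split[OF XRH wf(2) finX])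
  also have "\<dots> \<le> (\<Sum>h\<in>Hosp I. card (res_h P h))" by (rule sum_mono) (rule perh)
  also have "\<dots> = card P" by (rule card_split[OF PRH wf(2) finP, symmetric])
  finally have XP: "card X \<le> card P" .
  have resfst: "res M = fst ` M" for M :: "('r \<times> 'h) set" by (force simp: res_def)
  have injP: "inj_on fst P" using Pfun by (auto simp: inj_on_def)
  have injX: "inj_on fst X" using XT Tfun by (fastforce simp: inj_on_def)
  have cP: "card (res P) = card P" using card_image[OF injP] resfst by simp
  have cX: "card (res X) = card X" using card_image[OF injX] resfst by simp
  have tg: "fst ` tgs P X = res X - res P" by (force simp: tgs_def res_def)
  have "inj_on fst (tgs P X)" using injX by (rule inj_on_subset) (auto simp: tgs_def)
  then have ct: "card (tgs P X) = card (res X - res P)" using card_image tg by (metis (no_types))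
  have finrX: "finite (res X)" and finrP: "finite (res P)" using finX finP resfst by auto
  have "card (res X) = card ((res X - res P) \<union> (res X \<inter> res P))"
    by (rule arg_cong[where f=card]) blast
  also have "\<dots> = card (res X - res P) + card (res X \<inter> res P)"
    by (rule card_Un_disjoint) (use finrX in auto)
  finally have s1: "card (res X) = card (res X - res P) + card (res X \<inter> res P)" .
  have "res P \<subseteq> (res P - res T) \<union> (res X \<inter> res P)" using p4 by blast
  then have "card (res P) \<le> card ((res P - res T) \<union> (res X \<inter> res P))"
    by (rule card_mono[rotated]) (use finrP finrX in simp)
  also have "\<dots> \<le> card (res P - res T) + card (res X \<inter> res P)" by (rule card_Un_le)
  finally have s2: "card (res P) \<le> card (res P - res T) + card (res X \<inter> res P)" .
  show ?thesis unfolding TI(1) using s1 s2 ct cP cX XP by linarith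
qed

end
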